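(* Let $\Omega$ be a finite $w$-regular graph. Let $A$ and $B$ be induced subgraphs of $\Omega$ with disjoint vertex sets such that $V(A)\cup V(B)=V(\Omega)$ and $|V(A)|\ge|V(B)|$. If $B$ contains an edge, then $A$ contains an edge. *)

theory Defs
  imports Main
begin

definition finite_simple_graph :: "'a set \<Rightarrow> ('a \<Rightarrow> 'a \<Rightarrow> bool) \<Rightarrow> bool" where
  "finite_simple_graph V E \<longleftrightarrow> finite V
     \<and> (\<forall>x y. E x y \<longrightarrow> x \<in> V \<and> y \<in> V)
     \<and> (\<forall>x y. E x y \<longrightarrow> E y x)
     \<and> (\<forall>x. \<not> E x x)"

definition degree :: "'a set \<Rightarrow> ('a \<Rightarrow> 'a \<Rightarrow> bool) \<Rightarrow> 'a \<Rightarrow> nat" where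
  "degree V E v = card {u \<in> V. E v u}"

definition regular :: "'a set \<Rightarrow> ('a \<Rightarrow> 'a \<Rightarrow> bool) \<Rightarrow> nat \<Rightarrow> bool" where
  "regular V E w \<longleftrightarrow> (\<forall>v \<in> V. degree V E v = w)"

definition induced_has_edge :: "('a \<Rightarrow> 'a \<Rightarrow> bool) \<Rightarrow> 'a set \<Rightarrow> bool" where
  "induced_has_edge E S \<longleftrightarrow> (\<exists>x \<in> S. \<exists>y \<in> S. E x y)"

end

theory Submission
  imports Defs
begin

theorem lemma4p7:
  fixes V A B :: "'a set" and E :: "'a \<Rightarrow> 'a \<Rightarrow> bool" and w :: nat
  assumes "finite_simple_graph V E"
    and "regular V E w"
    and "A \<subseteq> V" and "B \<subseteq> V"
    and "A \<inter> B = {}" and "A \<union> B = V"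
    and "card A \<ge> card B"
    and "induced_has_edge E B"
  shows "induced_has_edge E A"
proof (rule ccontr)
  assume nA: "\<not> induced_has_edge E A"
  have fin: "finite V" and cl: "\<And>x y. E x y \<Longrightarrow> x \<in> V \<and> y \<in> V"
    and sym: "\<And>x y. E x y \<Longrightarrow> E y x" and irr: "\<And>x. \<not> E x x"
    using assms(1) unfolding finite_simple_graph_def by auto
  have fA: "finite A" and fB: "finite B" using fin assms(3,4) finite_subset by auto
  have deg: "\<And>v. v \<in> V \<Longrightarrow> card {u\<in>V. E v u} = w"
    using assms(2) unfolding regular_def degree_def by auto
  obtain x y where xy: "x \<in> B" "y \<in> B" "E x y"
    using assms(8) unfolding induced_has_edge_def by auto
  have cnt: "\<And>v S. finite S \<Longrightarrow> card {u\<in>S. E v u} = (\<Sum>u\<in>S. if E v u then 1 else 0::nat)"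
    by (simp add: sum.If_cases) (metis Collect_conj_eq Collect_mem_eq)
  have eqA: "\<And>a. a \<in> A \<Longrightarrow> card {u\<in>B. E a u} = w"
  proof -
    fix a assume a: "a \<in> A"
    have "{u\<in>B. E a u} = {u\<in>V. E a u}"
      using nA a assms(3,4,6) cl unfolding induced_has_edge_def by blast
    thus "card {u\<in>B. E a u} = w" using deg a assms(3) by auto
  qed
  have leB: "\<And>b. b \<in> B \<Longrightarrow> card {u\<in>A. E b u} \<le> w"
  proof -
    fix b assume b: "b \<in> B"
    have "card {u\<in>A. E b u} \<le> card {u\<in>V. E b u}"
      by (rule card_mono) (use fin assms(3) in auto)
    thus "card {u\<in>A. E b u} \<le> w" using deg b assms(4) by auto
  qed
  have ltx: "card {u\<in>A. E x u} < w"
  proof -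
    have "{u\<in>A. E x u} \<subset> {u\<in>V. E x u}"
      using xy assms(3,5) cl by blast
    hence "card {u\<in>A. E x u} < card {u\<in>V. E x u}"
      by (rule psubset_card_mono[rotated]) (use fin in auto)
    thus ?thesis using deg xy assms(4) by auto
  qed
  have "w * card A = (\<Sum>a\<in>A. card {u\<in>B. E a u})" using eqA by simp
  also have "\<dots> = (\<Sum>a\<in>A. \<Sum>u\<in>B. if E a u then 1 else 0::nat)" using cnt fB by simp
  also have "\<dots> = (\<Sum>u\<in>B. \<Sum>a\<in>A. if E u a then 1 else 0::nat)"
    by (subst sum.swap) (intro sum.cong refl, auto dest: sym)
  also have "\<dots> = (\<Sum>b\<in>B. card {u\<in>A. E b u})" using cnt fA by simp
  also have "\<dots> < (\<Sum>b\<in>B. w)"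
    by (rule sum_strict_mono_ex1) (use fB leB ltx xy in auto)
  also have "\<dots> = w * card B" by simp
  also have "\<dots> \<le> w * card A" using assms(7) by simp
  finally show False by simp
qed

end
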